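(* Let $M,N$ be complete pointed metric spaces and $f\colon M\to N$ a Lipschitz map with $f(0_M)=0_N$. If $\widehat f\colon\mathcal F(M)\to\mathcal F(N)$ is compact, then $$\lim_{d(x,y)\to+\infty}\frac{d(f(x),f(y))}{d(x,y)}=0,$$ i.e. for every $\varepsilon>0$ there is $R>0$ such that $d(f(x),f(y))\le\varepsilon d(x,y)$ whenever $d(x,y)\ge R$.
   Context: Scalars are $\mathbb K=\mathbb R$ or $\mathbb C$. For a pointed metric space $(M,d,0_M)$, $\mathrm{Lip}_0(M)$ denotes the Banach space of Lipschitz functions $g\colon M\to\mathbb K$ with $g(0_M)=0$ normed by the best Lipschitz constant; $\delta(x)\in\mathrm{Lip}_0(M)^*$ is evaluation at $x$; the Lipschitz-free space $\mathcal F(M)$ is the norm-closed linear span of $\{\delta(x):x\in M\}$ in $\mathrm{Lip}_0(M)^*$. For a Lipschitz map $f\colon M\to N$ with $f(0_M)=0_N$, $\widehat f\colon\mathcal F(M)\to\mathcal F(N)$ is the unique bounded linear operator with $\widehat f(\delta(x))=\delta(f(x))$ for all $x\in M$. *)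

theory Defs
  imports "HOL-Analysis.Analysis"
begin

definition lip0 :: "'a::metric_space \<Rightarrow> ('a \<Rightarrow> 'k::real_normed_field) set" where
  "lip0 z0 = {g. g z0 = 0 \<and> (\<exists>L. L-lipschitz_on UNIV g)}"

definition lipconst :: "('a::metric_space \<Rightarrow> 'k::real_normed_field) \<Rightarrow> real" where
  "lipconst g = Inf {L. L-lipschitz_on UNIV g}"

text \<open>Elements of Lip_0(M)^* are represented by functions on ('a => 'k); only their
  values on lip0 z0 matter. Dual norm:\<close>
definition dnorm :: "'a::metric_space \<Rightarrow> (('a \<Rightarrow> 'k::real_normed_field) \<Rightarrow> 'k) \<Rightarrow> real" where
  "dnorm z0 \<phi> = Sup {norm (\<phi> g) | g. g \<in> lip0 z0 \<and> lipconst g \<le> 1}"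

definition delta :: "'a \<Rightarrow> (('a \<Rightarrow> 'k) \<Rightarrow> 'k)" where
  "delta x = (\<lambda>g. g x)"

definition free :: "'a::metric_space \<Rightarrow> ((('a \<Rightarrow> 'k::real_normed_field) \<Rightarrow> 'k)) set" where
  "free z0 = {\<phi>.
     (\<forall>g\<in>lip0 z0. \<forall>h\<in>lip0 z0. \<phi> (\<lambda>x. g x + h x) = \<phi> g + \<phi> h) \<and>
     (\<forall>g\<in>lip0 z0. \<forall>c. \<phi> (\<lambda>x. c * g x) = c * \<phi> g) \<and>
     (\<exists>B. \<forall>g\<in>lip0 z0. norm (\<phi> g) \<le> B * lipconst g) \<and>
     (\<forall>\<epsilon>>0. \<exists>S c. finite S \<and>
        dnorm z0 (\<lambda>g. \<phi> g - (\<Sum>x\<in>S. c x * delta x g)) \<le> \<epsilon>)}"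

text \<open>The linearisation f-hat: f-hat(mu)(g) = mu(g o f), i.e. the restriction of the adjoint of
  the composition operator; it satisfies f-hat(delta x) = delta (f x).\<close>
definition fhat :: "('a \<Rightarrow> 'b) \<Rightarrow> (('a \<Rightarrow> 'k) \<Rightarrow> 'k) \<Rightarrow> (('b \<Rightarrow> 'k) \<Rightarrow> 'k)" where
  "fhat f \<mu> = (\<lambda>g. \<mu> (g \<circ> f))"

text \<open>Compactness of an operator T: F(M) -> F(N): the image of the closed unit ball of F(M) is
  relatively compact in F(N), i.e. every sequence in the unit ball has a subsequence whose image
  converges in F(N).\<close>
definition compact_op ::
  "'a::metric_space \<Rightarrow> 'b::metric_space \<Rightarrow>
   ((('a \<Rightarrow> 'k::real_normed_field) \<Rightarrow> 'k) \<Rightarrow> (('b \<Rightarrow> 'k) \<Rightarrow> 'k)) \<Rightarrow> bool" where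
  "compact_op zM zN T \<longleftrightarrow>
     (\<forall>\<mu>. (\<forall>n. \<mu> n \<in> free zM \<and> dnorm zM (\<mu> n) \<le> 1) \<longrightarrow>
        (\<exists>(r::nat \<Rightarrow> nat) \<nu>. strict_mono r \<and> \<nu> \<in> free zN \<and>
           (\<lambda>n. dnorm zN (\<lambda>g. T (\<mu> (r n)) g - \<nu> g)) \<longlonglongrightarrow> 0))"

end

theory Submission
  imports Defs
begin


definition trunc :: "real \<Rightarrow> 'k::real_normed_vector \<Rightarrow> 'k" where
  "trunc K z = (if norm z \<le> K then z else (K / norm z) *\<^sub>R z)"

lemma trunc_norm: "0 \<le> K \<Longrightarrow> norm (trunc K z) \<le> K"
  by (auto simp: trunc_def)

lemma trunc_id: "norm z \<le> K \<Longrightarrow> trunc K z = z"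
  by (auto simp: trunc_def)

lemma trunc_half: 
  assumes K: "0 \<le> K" and z: "K < norm z" and w: "norm w \<le> K"
  shows "norm (trunc K z - w) \<le> 2 * norm (z - w)"
proof -
  have nz: "norm z > 0" using K z by linarith
  have "trunc K z - w = (trunc K z - z) + (z - w)" by simp
  hence "norm (trunc K z - w) \<le> norm (trunc K z - z) + norm (z - w)" by (metis norm_triangle_ineq)
  moreover have "trunc K z - z = (K / norm z - 1) *\<^sub>R z" using z by (simp add: trunc_def algebra_simps)
  hence "norm (trunc K z - z) = \<bar>K / norm z - 1\<bar> * norm z" by simp
  also have "\<dots> = norm z - K" using nz z by (simp add: abs_if field_simps)
  also have "\<dots> \<le> norm (z - w)" using w norm_triangle_ineq2[of z w] by linarith
  ultimately show ?thesis by linarith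
qed

lemma trunc_lip:
  assumes K: "0 \<le> K"
  shows "norm (trunc K z - trunc K w) \<le> 2 * norm (z - w)"
proof (cases "norm z \<le> K")
  case True
  show ?thesis
  proof (cases "norm w \<le> K")
    case True with \<open>norm z \<le> K\<close> show ?thesis by (simp add: trunc_id)
  next
    case False
    have "norm (trunc K w - z) \<le> 2 * norm (w - z)" using trunc_half[OF K _ True] False by simp
    thus ?thesis using True by (simp add: trunc_id norm_minus_commute)
  qed
next
  case False
  show ?thesis
  proof (cases "norm w \<le> K")
    case True 
    thus ?thesis using trunc_half[OF K _ True] False by (simp add: trunc_id)
  next
    case F2: False
    have nz: "norm z > 0" "norm w > 0" using K False F2 by linarith+
    have e: "trunc K z - trunc K w = (K / norm z) *\<^sub>R (z - w) + (K * (1 / norm z - 1 / norm w)) *\<^sub>R w"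
      using False F2 by (simp add: trunc_def algebra_simps)
    have "norm (trunc K z - trunc K w) \<le> norm ((K / norm z) *\<^sub>R (z - w)) + norm ((K * (1 / norm z - 1 / norm w)) *\<^sub>R w)"
      unfolding e by (rule norm_triangle_ineq)
    also have "norm ((K / norm z) *\<^sub>R (z - w)) = (K / norm z) * norm (z - w)" using K nz by simp
    also have "\<dots> \<le> norm (z - w)" using K False nz
      by (simp add: divide_le_eq_1 mult_le_cancel_right1 field_simps mult_right_mono)
    also have "norm ((K * (1 / norm z - 1 / norm w)) *\<^sub>R w) = K * \<bar>norm w - norm z\<bar> / norm z"
    proof -
      have "norm ((K * (1 / norm z - 1 / norm w)) *\<^sub>R w) = K * \<bar>1 / norm z - 1 / norm w\<bar> * norm w"
        using K by (simp add: abs_mult)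
      also have "\<bar>1 / norm z - 1 / norm w\<bar> = \<bar>norm w - norm z\<bar> / (norm z * norm w)" using nz by (simp add: field_simps abs_divide)
      finally show ?thesis using nz by simp
    qed
    also have "\<dots> \<le> \<bar>norm w - norm z\<bar>" using K False nz
      by (simp add: divide_le_eq field_simps mult_right_mono)
    also have "\<bar>norm w - norm z\<bar> \<le> norm (z - w)" by (metis norm_minus_commute norm_triangle_ineq3)
    finally show ?thesis by simp
  qed
qed


lemma lipconst_props:
  fixes g :: "'a::metric_space \<Rightarrow> 'k::real_normed_field"
  assumes "L-lipschitz_on UNIV g"
  shows "0 \<le> lipconst g" "lipconst g \<le> L" "(lipconst g)-lipschitz_on UNIV g"
proof -
  let ?S = "{L. L-lipschitz_on UNIV g}"
  have ne: "?S \<noteq> {}" using assms by blast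
  have bb: "bdd_below ?S" by (rule bdd_belowI[of _ 0]) (auto dest: lipschitz_on_nonneg)
  show "0 \<le> lipconst g" unfolding lipconst_def
    by (rule cInf_greatest[OF ne]) (auto dest: lipschitz_on_nonneg)
  show "lipconst g \<le> L" unfolding lipconst_def by (rule cInf_lower[OF _ bb]) (use assms in auto)
  have "dist (g x) (g y) \<le> lipconst g * dist x y" for x y
  proof (cases "x = y")
    case True then show ?thesis by simp
  next
    case False
    hence d: "dist x y > 0" by simp
    have "dist (g x) (g y) / dist x y \<le> lipconst g" unfolding lipconst_def
      by (rule cInf_greatest[OF ne]) (use d in \<open>auto simp: divide_le_eq dest: lipschitz_onD\<close>)
    thus ?thesis using d by (simp add: divide_le_eq)
  qed
  thus "(lipconst g)-lipschitz_on UNIV g" using \<open>0 \<le> lipconst g\<close> by (auto intro: lipschitz_onI)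
qed

lemma lip0_lipconst:
  "g \<in> lip0 z0 \<Longrightarrow> (lipconst g)-lipschitz_on UNIV g \<and> 0 \<le> lipconst g"
  unfolding lip0_def using lipconst_props by blast

lemma lipconst_zero: "lipconst (\<lambda>_::'a::metric_space. 0::'k::real_normed_field) = 0"
proof -
  have "(0::real)-lipschitz_on UNIV (\<lambda>_::'a. 0::'k)" by (auto intro: lipschitz_onI)
  from lipconst_props[OF this] show ?thesis by linarith
qed

lemma zero_lip0: "(\<lambda>_. 0) \<in> lip0 z0"
  unfolding lip0_def by (auto intro!: exI[of _ 0] lipschitz_onI)

lemma dnorm_bound:
  fixes \<rho> :: "('a::metric_space \<Rightarrow> 'k::real_normed_field) \<Rightarrow> 'k"
  assumes bd: "\<And>g. g \<in> lip0 z0 \<Longrightarrow> lipconst g \<le> 1 \<Longrightarrow> norm (\<rho> g) \<le> B"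
    and hom: "\<And>g c. g \<in> lip0 z0 \<Longrightarrow> \<rho> (\<lambda>x. c * g x) = c * \<rho> g"
  shows "0 \<le> dnorm z0 \<rho>" "\<And>g. g \<in> lip0 z0 \<Longrightarrow> norm (\<rho> g) \<le> dnorm z0 \<rho> * lipconst g"
proof -
  let ?A = "{norm (\<rho> g) | g. g \<in> lip0 z0 \<and> lipconst g \<le> 1}"
  have bda: "bdd_above ?A" by (rule bdd_aboveI[of _ B]) (use bd in auto)
  have r0: "\<rho> (\<lambda>_. 0) = 0"
    using hom[OF zero_lip0, of 0] by simp
  have z: "(\<lambda>_. 0) \<in> lip0 z0 \<and> lipconst (\<lambda>_::'a. 0::'k) \<le> 1" by (simp add: zero_lip0 lipconst_zero)
  have "norm (\<rho> (\<lambda>_. 0)) \<in> ?A" using z by blast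
  hence "0 \<in> ?A" using r0 by simp
  thus "0 \<le> dnorm z0 \<rho>" unfolding dnorm_def by (rule cSup_upper[OF _ bda])
  fix g :: "'a \<Rightarrow> 'k" assume g: "g \<in> lip0 z0"
  define L where "L = lipconst g"
  have Lg: "L-lipschitz_on UNIV g" "0 \<le> L" using lip0_lipconst[OF g] L_def by auto
  have gz: "g z0 = 0" using g by (simp add: lip0_def)
  show "norm (\<rho> g) \<le> dnorm z0 \<rho> * lipconst g"
  proof (cases "L = 0")
    case True
    have "g x = 0" for x using lipschitz_onD[OF Lg(1), of x z0] True gz by simp
    hence "g = (\<lambda>x. 0 * g x)" by auto
    hence "\<rho> g = 0" using hom[OF g, of 0] by simp
    thus ?thesis using True L_def by simp
  next
    case False
    hence Lp: "L > 0" using Lg by simp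
    define h where "h = (\<lambda>x. of_real (1/L) * g x)"
    have hl: "1-lipschitz_on UNIV h"
    proof (rule lipschitz_onI)
      fix x y :: 'a
      have "dist (h x) (h y) = (1/L) * dist (g x) (g y)"
      proof -
        have "h x - h y = of_real (1/L) * (g x - g y)" by (simp add: h_def algebra_simps)
        thus ?thesis using Lp by (simp add: dist_norm norm_divide)
      qed
      also have "\<dots> \<le> (1/L) * (L * dist x y)"
        using lipschitz_onD[OF Lg(1)] Lp by (intro mult_left_mono) auto
      finally show "dist (h x) (h y) \<le> 1 * dist x y" using Lp by simp
    qed simp
    have h0: "h \<in> lip0 z0" using hl gz unfolding lip0_def h_def by auto
    have "lipconst h \<le> 1" using lipconst_props(2)[OF hl] .
    hence "norm (\<rho> h) \<in> ?A" using h0 by blast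
    hence "norm (\<rho> h) \<le> dnorm z0 \<rho>" unfolding dnorm_def by (rule cSup_upper[OF _ bda])
    moreover have "\<rho> h = of_real (1/L) * \<rho> g" unfolding h_def by (rule hom[OF g])
    hence "norm (\<rho> h) = norm (\<rho> g) / L" using Lp by (simp add: norm_divide)
    ultimately show ?thesis using Lp L_def by (simp add: divide_le_eq mult.commute)
  qed
qed

lemma dnorm_le:
  assumes "\<And>g. g \<in> lip0 z0 \<Longrightarrow> lipconst g \<le> 1 \<Longrightarrow> norm (\<rho> g) \<le> b"
  shows "dnorm z0 (\<rho> :: ('a::metric_space \<Rightarrow> 'k::real_normed_field) \<Rightarrow> 'k) \<le> b"
proof -
  have z: "(\<lambda>_. 0) \<in> lip0 z0 \<and> lipconst (\<lambda>_::'a. 0::'k) \<le> 1" by (simp add: zero_lip0 lipconst_zero)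
  show ?thesis unfolding dnorm_def
    by (rule cSup_least) (use assms z in blast)+
qed


lemma free_zero:
  fixes \<nu> :: "('a::metric_space \<Rightarrow> 'k::real_normed_field) \<Rightarrow> 'k"
  assumes nu: "\<nu> \<in> free z0"
    and bz: "\<And>g K. g \<in> lip0 z0 \<Longrightarrow> (\<forall>x. norm (g x) \<le> K) \<Longrightarrow> \<nu> g = 0"
    and g: "g \<in> lip0 z0"
  shows "\<nu> g = 0"
proof -
  obtain B where B: "\<And>g. g \<in> lip0 z0 \<Longrightarrow> norm (\<nu> g) \<le> B * lipconst g"
    using nu unfolding free_def by blast
  have hnu: "\<And>g c. g \<in> lip0 z0 \<Longrightarrow> \<nu> (\<lambda>x. c * g x) = c * \<nu> g"
    using nu unfolding free_def by blast
  define L where "L = lipconst g"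
  have Lg: "L-lipschitz_on UNIV g" "0 \<le> L" using lip0_lipconst[OF g] L_def by auto
  have gz: "g z0 = 0" using g by (simp add: lip0_def)
  have key: "norm (\<nu> g) \<le> 3 * e * L" if e: "e > 0" for e
  proof -
    obtain S c where S: "finite S" and dn: "dnorm z0 (\<lambda>g. \<nu> g - (\<Sum>x\<in>S. c x * delta x g)) \<le> e"
      using nu e unfolding free_def by blast
    define \<rho> where "\<rho> = (\<lambda>g. \<nu> g - (\<Sum>x\<in>S. c x * g x))"
    have dn': "dnorm z0 \<rho> \<le> e" using dn by (simp add: \<rho>_def delta_def)
    have hom: "\<rho> (\<lambda>x. c' * h x) = c' * \<rho> h" if "h \<in> lip0 z0" for h c'
      using hnu[OF that] by (simp add: \<rho>_def sum_distrib_left right_diff_distrib mult.left_commute)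
    have bd: "norm (\<rho> h) \<le> \<bar>B\<bar> + (\<Sum>x\<in>S. norm (c x) * dist x z0)"
      if h: "h \<in> lip0 z0" "lipconst h \<le> 1" for h
    proof -
      have l: "(lipconst h)-lipschitz_on UNIV h" "0 \<le> lipconst h" using lip0_lipconst[OF h(1)] by auto
      have hz: "h z0 = 0" using h by (simp add: lip0_def)
      have "norm (\<nu> h) \<le> B * lipconst h" by (rule B[OF h(1)])
      also have "\<dots> \<le> \<bar>B\<bar> * lipconst h" using l(2) by (intro mult_right_mono) auto
      also have "\<dots> \<le> \<bar>B\<bar>" using l(2) h(2) by (intro mult_left_le) auto
      finally have 1: "norm (\<nu> h) \<le> \<bar>B\<bar>" .
      have "norm (\<Sum>x\<in>S. c x * h x) \<le> (\<Sum>x\<in>S. norm (c x * h x))" by (rule norm_sum)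
      also have "\<dots> \<le> (\<Sum>x\<in>S. norm (c x) * dist x z0)"
      proof (rule sum_mono)
        fix x
        have "norm (h x) = dist (h x) (h z0)" using hz by (simp add: dist_norm)
        also have "\<dots> \<le> lipconst h * dist x z0" using lipschitz_onD[OF l(1)] by simp
        also have "\<dots> \<le> dist x z0" using h(2) l(2) by (intro mult_left_le_one_le) auto
        finally show "norm (c x * h x) \<le> norm (c x) * dist x z0"
          by (simp add: norm_mult mult_left_mono)
      qed
      finally have 2: "norm (\<Sum>x\<in>S. c x * h x) \<le> (\<Sum>x\<in>S. norm (c x) * dist x z0)" .
      have "norm (\<rho> h) \<le> norm (\<nu> h) + norm (\<Sum>x\<in>S. c x * h x)"
        unfolding \<rho>_def by (rule norm_triangle_ineq4)
      thus ?thesis using 1 2 by linarith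
    qed
    have DB1: "0 \<le> dnorm z0 \<rho>"
      by (rule dnorm_bound(1)) (erule (1) bd, erule hom)
    have DB2: "norm (\<rho> h) \<le> dnorm z0 \<rho> * lipconst h" if "h \<in> lip0 z0" for h
      by (rule dnorm_bound(2)) (erule (1) bd, erule hom, rule that)
    define K where "K = (\<Sum>x\<in>S. norm (g x))"
    have K0: "0 \<le> K" unfolding K_def by (simp add: sum_nonneg)
    define gK where "gK = (\<lambda>x. trunc K (g x))"
    have gKl: "(2*L)-lipschitz_on UNIV gK"
    proof (rule lipschitz_onI)
      fix x y :: 'a
      have "dist (gK x) (gK y) \<le> 2 * dist (g x) (g y)"
        unfolding gK_def dist_norm by (rule trunc_lip[OF K0])
      also have "\<dots> \<le> 2 * (L * dist x y)" using lipschitz_onD[OF Lg(1)] by simp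
      finally show "dist (gK x) (gK y) \<le> 2 * L * dist x y" by simp
    qed (use Lg in simp)
    have gK0: "gK \<in> lip0 z0" unfolding lip0_def using gKl gz K0
      by (auto simp: gK_def trunc_def)
    have gKb: "\<forall>x. norm (gK x) \<le> K" unfolding gK_def using trunc_norm[OF K0] by blast
    have nugK: "\<nu> gK = 0" by (rule bz[OF gK0 gKb])
    have same: "(\<Sum>x\<in>S. c x * gK x) = (\<Sum>x\<in>S. c x * g x)"
    proof (rule sum.cong[OF refl])
      fix x assume "x \<in> S"
      hence "norm (g x) \<le> K" unfolding K_def using S by (intro member_le_sum) auto
      thus "c x * gK x = c x * g x" by (simp add: gK_def trunc_id)
    qed
    have lgK: "lipconst gK \<le> 2 * L" by (rule lipconst_props(2)[OF gKl])
    have "\<nu> g = \<rho> g - \<rho> gK" using nugK same by (simp add: \<rho>_def)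
    hence "norm (\<nu> g) \<le> norm (\<rho> g) + norm (\<rho> gK)" by (simp add: norm_triangle_ineq4)
    also have "norm (\<rho> g) \<le> dnorm z0 \<rho> * L" using DB2[OF g] L_def by simp
    also have "\<dots> \<le> e * L" using dn' Lg(2) by (simp add: mult_right_mono)
    also have "norm (\<rho> gK) \<le> dnorm z0 \<rho> * (2 * L)"
      using DB2[OF gK0] lgK DB1 by (meson mult_left_mono order_trans)
    also have "\<dots> \<le> e * (2 * L)" using dn' Lg(2) by (simp add: mult_right_mono)
    finally show ?thesis by (simp add: algebra_simps)
  qed
  have "norm (\<nu> g) \<le> 0"
  proof (rule field_le_epsilon)
    fix e :: real assume e: "0 < e"
    have "norm (\<nu> g) \<le> 3 * (e / (3 * L + 1)) * L" using key[of "e / (3*L+1)"] e Lg(2) by simp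
    also have "\<dots> \<le> e" using e Lg(2) by (simp add: field_simps)
    finally show "norm (\<nu> g) \<le> 0 + e" by simp
  qed
  thus ?thesis by simp
qed


lemma main_generic:
  fixes f :: "'a::metric_space \<Rightarrow> 'b::metric_space" and zM :: 'a and zN :: 'b
  assumes lip: "C-lipschitz_on UNIV f"
    and cpt: "compact_op zM zN (fhat f :: (('a \<Rightarrow> 'k::real_normed_field) \<Rightarrow> 'k) \<Rightarrow> _)"
  shows "\<forall>\<epsilon>>0. \<exists>R>0. \<forall>x y. dist x y \<ge> R \<longrightarrow> dist (f x) (f y) \<le> \<epsilon> * dist x y"
proof (rule ccontr)
  assume "\<not> ?thesis"
  then obtain \<epsilon> where ep: "\<epsilon> > 0" and bad: "\<And>R. R > 0 \<Longrightarrow> \<exists>x y. R \<le> dist x y \<and> \<epsilon> * dist x y < dist (f x) (f y)"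
    by (auto simp: not_le)
  have "\<forall>n::nat. \<exists>p. real n + 1 \<le> dist (fst p) (snd p) \<and> \<epsilon> * dist (fst p) (snd p) < dist (f (fst p)) (f (snd p))"
  proof
    fix n :: nat
    obtain x y where "real n + 1 \<le> dist x y \<and> \<epsilon> * dist x y < dist (f x) (f y)"
      using bad[of "real n + 1"] by auto
    thus "\<exists>p. real n + 1 \<le> dist (fst p) (snd p) \<and> \<epsilon> * dist (fst p) (snd p) < dist (f (fst p)) (f (snd p))"
      by (intro exI[of _ "(x, y)"]) simp
  qed
  then obtain P where P: "\<And>n. real n + 1 \<le> dist (fst (P n)) (snd (P n)) \<and> \<epsilon> * dist (fst (P n)) (snd (P n)) < dist (f (fst (P n))) (f (snd (P n)))"
    by metis
  define X where "X n = fst (P n)" for n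
  define Y where "Y n = snd (P n)" for n
  define D where "D n = dist (X n) (Y n)" for n
  have DX: "real n + 1 \<le> D n" "\<epsilon> * D n < dist (f (X n)) (f (Y n))" for n
    using P[of n] by (auto simp: X_def Y_def D_def)
  have Dp: "D n > 0" for n using DX(1)[of n] by (smt (verit) of_nat_0_le_iff)
  have XY: "X n \<noteq> Y n" for n using Dp[of n] by (auto simp: D_def)
  define \<mu> :: "nat \<Rightarrow> ('a \<Rightarrow> 'k) \<Rightarrow> 'k" where "\<mu> n = (\<lambda>g. (g (X n) - g (Y n)) / of_real (D n))" for n
  have mub: "norm (\<mu> n g) \<le> lipconst g" if g: "g \<in> lip0 zM" for n g
  proof -
    have l: "dist (g (X n)) (g (Y n)) \<le> lipconst g * D n"
      using lipschitz_onD[OF conjunct1[OF lip0_lipconst[OF g]]] by (simp add: D_def)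
    have "norm (\<mu> n g) = dist (g (X n)) (g (Y n)) / D n"
      using Dp[of n] by (simp add: \<mu>_def norm_divide dist_norm)
    also have "\<dots> \<le> lipconst g" using l Dp[of n] by (simp add: divide_le_eq)
    finally show ?thesis .
  qed
  have mufree: "\<mu> n \<in> free zM \<and> dnorm zM (\<mu> n) \<le> 1" for n
  proof
    have zero: "(\<lambda>g. \<mu> n g - (\<Sum>x\<in>{X n, Y n}. (if x = X n then 1 / of_real (D n) else - 1 / of_real (D n)) * delta x g)) = (\<lambda>g. 0)"
      using XY[of n] by (intro ext) (simp add: \<mu>_def delta_def diff_divide_distrib)
    have dz: "dnorm zM (\<lambda>g::'a \<Rightarrow> 'k. 0::'k) \<le> e" if "e > 0" for e
      by (rule dnorm_le) (use that in simp)
    show "\<mu> n \<in> free zM"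
      unfolding free_def
    proof (intro CollectI conjI ballI allI impI)
      fix g h :: "'a \<Rightarrow> 'k"
      show "\<mu> n (\<lambda>x. g x + h x) = \<mu> n g + \<mu> n h" by (simp add: \<mu>_def diff_divide_distrib add_divide_distrib)
    next
      fix g :: "'a \<Rightarrow> 'k" and c
      show "\<mu> n (\<lambda>x. c * g x) = c * \<mu> n g" by (simp add: \<mu>_def right_diff_distrib times_divide_eq_right)
    next
      show "\<exists>B. \<forall>g\<in>lip0 zM. norm (\<mu> n g) \<le> B * lipconst g"
        using mub by (intro exI[of _ 1]) auto
    next
      fix e :: real assume "e > 0"
      thus "\<exists>S c. finite S \<and> dnorm zM (\<lambda>g. \<mu> n g - (\<Sum>x\<in>S. c x * delta x g)) \<le> e"
        using zero dz by (intro exI[of _ "{X n, Y n}"] exI[of _ "\<lambda>x. if x = X n then 1 / of_real (D n) else - 1 / of_real (D n)"]) auto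
    qed
    show "dnorm zM (\<mu> n) \<le> 1"
      by (rule dnorm_le) (meson mub order_trans)
  qed
  obtain r \<nu> where r: "strict_mono r" and nu: "\<nu> \<in> free zN"
    and lim: "(\<lambda>n. dnorm zN (\<lambda>g. fhat f (\<mu> (r n)) g - \<nu> g)) \<longlonglongrightarrow> 0"
    using cpt mufree unfolding compact_op_def by blast
  define \<rho> where "\<rho> n = (\<lambda>g. fhat f (\<mu> (r n)) g - \<nu> g)" for n
  have \<rho>e: "\<rho> n g = (g (f (X (r n))) - g (f (Y (r n)))) / of_real (D (r n)) - \<nu> g" for n g
    by (simp add: \<rho>_def fhat_def \<mu>_def)
  obtain B where B: "\<And>g. g \<in> lip0 zN \<Longrightarrow> norm (\<nu> g) \<le> B * lipconst g"
    using nu unfolding free_def by blast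
  have hnu: "\<And>g c. g \<in> lip0 zN \<Longrightarrow> \<nu> (\<lambda>x. c * g x) = c * \<nu> g"
    using nu unfolding free_def by blast
  have C0: "0 \<le> C" using lip by (rule lipschitz_on_nonneg)
  have fmu: "norm ((g (f (X n)) - g (f (Y n))) / of_real (D n)) \<le> C * lipconst g" if g: "g \<in> lip0 zN" for n g
  proof -
    have l: "dist (g (f (X n))) (g (f (Y n))) \<le> lipconst g * dist (f (X n)) (f (Y n))"
      using lipschitz_onD[OF conjunct1[OF lip0_lipconst[OF g]]] by simp
    also have "\<dots> \<le> lipconst g * (C * D n)"
      using lipschitz_onD[OF lip] lip0_lipconst[OF g] by (intro mult_left_mono) (auto simp: D_def)
    finally have l2: "dist (g (f (X n))) (g (f (Y n))) \<le> C * lipconst g * D n" by (simp add: algebra_simps)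
    have "norm ((g (f (X n)) - g (f (Y n))) / of_real (D n)) = dist (g (f (X n))) (g (f (Y n))) / D n"
      using Dp[of n] by (simp add: norm_divide dist_norm)
    also have "\<dots> \<le> C * lipconst g" using l2 Dp[of n] by (simp add: divide_le_eq)
    finally show ?thesis .
  qed
  have bd: "norm (\<rho> n h) \<le> C + \<bar>B\<bar>" if h: "h \<in> lip0 zN" "lipconst h \<le> 1" for n h
  proof -
    have l: "0 \<le> lipconst h" using lip0_lipconst[OF h(1)] by auto
    have "norm (\<nu> h) \<le> B * lipconst h" by (rule B[OF h(1)])
    also have "\<dots> \<le> \<bar>B\<bar> * lipconst h" using l by (intro mult_right_mono) auto
    also have "\<dots> \<le> \<bar>B\<bar>" using l h(2) by (intro mult_left_le) auto
    finally have 1: "norm (\<nu> h) \<le> \<bar>B\<bar>" .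
    have "C * lipconst h \<le> C" using C0 l h(2) by (intro mult_left_le) auto
    hence 2: "norm ((h (f (X (r n))) - h (f (Y (r n)))) / of_real (D (r n))) \<le> C" using fmu[OF h(1)] by (meson order_trans)
    have "norm (\<rho> n h) \<le> norm ((h (f (X (r n))) - h (f (Y (r n)))) / of_real (D (r n))) + norm (\<nu> h)"
      unfolding \<rho>e by (rule norm_triangle_ineq4)
    thus ?thesis using 1 2 by linarith
  qed
  have hom: "\<rho> n (\<lambda>x. c * h x) = c * \<rho> n h" if "h \<in> lip0 zN" for n h c
    using hnu[OF that, of c] by (simp add: \<rho>e algebra_simps)
  have DB1: "0 \<le> dnorm zN (\<rho> n)" for n
    by (rule dnorm_bound(1)) (erule (1) bd, erule hom)
  have DB2: "norm (\<rho> n h) \<le> dnorm zN (\<rho> n) * lipconst h" if "h \<in> lip0 zN" for n h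
    by (rule dnorm_bound(2)) (erule (1) bd, erule hom, rule that)
  have lim': "(\<lambda>n. dnorm zN (\<rho> n)) \<longlonglongrightarrow> 0" using lim by (simp add: \<rho>_def)
  have bz: "\<nu> g = 0" if g: "g \<in> lip0 zN" and K: "\<forall>x. norm (g x) \<le> K" for g K
  proof -
    have Dr: "real n + 1 \<le> D (r n)" for n
      using DX(1)[of "r n"] seq_suble[OF r, of n] by linarith
    have t1: "(\<lambda>n. dnorm zN (\<rho> n) * lipconst g) \<longlonglongrightarrow> 0"
      using tendsto_mult_left_zero[OF lim', of "lipconst g"] by simp
    have t2: "(\<lambda>n. 2 * \<bar>K\<bar> / D (r n)) \<longlonglongrightarrow> 0"
    proof (rule Lim_null_comparison[where g = "\<lambda>n. 2 * \<bar>K\<bar> * inverse (real (Suc n))"])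
      show "(\<lambda>n. 2 * \<bar>K\<bar> * inverse (real (Suc n))) \<longlonglongrightarrow> 0"
        using tendsto_mult_right_zero[OF LIMSEQ_inverse_real_of_nat, of "2 * \<bar>K\<bar>"] by simp
      show "\<forall>\<^sub>F n in sequentially. norm (2 * \<bar>K\<bar> / D (r n)) \<le> 2 * \<bar>K\<bar> * inverse (real (Suc n))"
      proof (intro always_eventually allI)
        fix n
        have "2 * \<bar>K\<bar> / D (r n) \<le> 2 * \<bar>K\<bar> / (real n + 1)"
          using Dr[of n] by (intro divide_left_mono) auto
        thus "norm (2 * \<bar>K\<bar> / D (r n)) \<le> 2 * \<bar>K\<bar> * inverse (real (Suc n))"
          using Dp[of "r n"] by (simp add: divide_inverse add.commute)
      qed
    qed
    have "(\<lambda>n. dnorm zN (\<rho> n) * lipconst g + 2 * \<bar>K\<bar> / D (r n)) \<longlonglongrightarrow> 0 + 0"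
      by (rule tendsto_add[OF t1 t2])
    moreover have "norm (\<nu> g) \<le> dnorm zN (\<rho> n) * lipconst g + 2 * \<bar>K\<bar> / D (r n)" for n
    proof -
      have a: "norm (g (f (X (r n))) - g (f (Y (r n)))) \<le> 2 * \<bar>K\<bar>"
        using norm_triangle_ineq4[of "g (f (X (r n)))" "g (f (Y (r n)))"] K
        by (smt (verit))
      have b: "norm ((g (f (X (r n))) - g (f (Y (r n)))) / of_real (D (r n))) \<le> 2 * \<bar>K\<bar> / D (r n)"
        using a Dp[of "r n"] by (simp add: norm_divide divide_right_mono)
      have "\<nu> g = (g (f (X (r n))) - g (f (Y (r n)))) / of_real (D (r n)) - \<rho> n g" by (simp add: \<rho>e)
      hence "norm (\<nu> g) \<le> norm ((g (f (X (r n))) - g (f (Y (r n)))) / of_real (D (r n))) + norm (\<rho> n g)"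
        by (simp add: norm_triangle_ineq4)
      thus ?thesis using b DB2[OF g, of n] by linarith
    qed
    ultimately have "norm (\<nu> g) \<le> 0" by (intro LIMSEQ_le_const) auto
    thus ?thesis by simp
  qed
  have nu0: "\<nu> g = 0" if "g \<in> lip0 zN" for g
    by (rule free_zero[OF nu _ that]) (erule bz, assumption)
  obtain N where N: "\<And>n. n \<ge> N \<Longrightarrow> dnorm zN (\<rho> n) < \<epsilon>"
    using order_tendstoD(2)[OF lim' ep] unfolding eventually_sequentially by blast
  define p where "p = f (Y (r N))"
  define h :: "'b \<Rightarrow> 'k" where "h = (\<lambda>z. of_real (dist z p - dist zN p))"
  have hl: "1-lipschitz_on UNIV h"
  proof (rule lipschitz_onI)
    fix x y :: 'b
    have "dist (h x) (h y) = \<bar>dist x p - dist y p\<bar>"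
      by (simp add: h_def dist_norm flip: of_real_diff)
    also have "\<dots> \<le> dist x y" using abs_dist_diff_le[of x p y] by (simp add: dist_commute)
    finally show "dist (h x) (h y) \<le> 1 * dist x y" by simp
  qed simp
  have h0: "h \<in> lip0 zN" using hl unfolding lip0_def h_def by auto
  have hc: "lipconst h \<le> 1" by (rule lipconst_props(2)[OF hl])
  have "\<rho> N h = of_real (dist (f (X (r N))) p) / of_real (D (r N))"
    using nu0[OF h0] by (simp add: \<rho>e h_def p_def)
  hence "norm (\<rho> N h) = dist (f (X (r N))) (f (Y (r N))) / D (r N)"
    using Dp[of "r N"] by (simp add: norm_divide p_def)
  also have "\<dots> > \<epsilon>" using DX(2)[of "r N"] Dp[of "r N"] by (simp add: less_divide_eq mult.commute)
  finally have e1: "\<epsilon> < norm (\<rho> N h)" .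
  have e2: "norm (\<rho> N h) \<le> dnorm zN (\<rho> N) * lipconst h" by (rule DB2[OF h0])
  have e3: "dnorm zN (\<rho> N) * lipconst h \<le> dnorm zN (\<rho> N)" using DB1[of N] hc by (simp add: mult_left_le)
  have e4: "dnorm zN (\<rho> N) < \<epsilon>" using N by simp
  show False using e1 e2 e3 e4 by linarith
qed


theorem mainTheorem9:
  fixes f :: "'a::metric_space \<Rightarrow> 'b::metric_space" and zM :: 'a and zN :: 'b
  assumes "complete (UNIV :: 'a set)" and "complete (UNIV :: 'b set)"
    and "\<exists>C. C-lipschitz_on UNIV f" and "f zM = zN"
    and "compact_op zM zN (fhat f :: (('a \<Rightarrow> real) \<Rightarrow> real) \<Rightarrow> _)
       \<or> compact_op zM zN (fhat f :: (('a \<Rightarrow> complex) \<Rightarrow> complex) \<Rightarrow> _)"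
  shows "\<forall>\<epsilon>>0. \<exists>R>0. \<forall>x y. dist x y \<ge> R \<longrightarrow> dist (f x) (f y) \<le> \<epsilon> * dist x y"
proof -
  obtain C where C: "C-lipschitz_on UNIV f" using assms(3) by blast
  from assms(5) show ?thesis
  proof
    assume "compact_op zM zN (fhat f :: (('a \<Rightarrow> real) \<Rightarrow> real) \<Rightarrow> _)"
    from main_generic[OF C this] show ?thesis .
  next
    assume "compact_op zM zN (fhat f :: (('a \<Rightarrow> complex) \<Rightarrow> complex) \<Rightarrow> _)"
    from main_generic[OF C this] show ?thesis .
  qed
qed

end
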